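(* Let $V$ be a real vector space of dimension $m=p+q\ge 3$ equipped with a non-degenerate symmetric inner product $(\cdot,\cdot)$ of signature $(p,q)$ (arbitrary), let $R$ be an algebraic curvature tensor on $V$, and let $1\le k\le m-1$. If $R$ is $k$ Osserman, then $\mathcal{J}_R(x)$ is nilpotent for every complex null vector $x\in\mathcal{N}$.
   Context: An algebraic curvature tensor is $R\in\otimes^4V^*$ with $R(x,y,z,w)=R(z,w,x,y)=-R(y,x,z,w)$ and $R(x,y,z,w)+R(y,z,x,w)+R(z,x,y,w)=0$. The Jacobi operator $\mathcal{J}_R(x)$ is the linear map of $V$ defined by $(\mathcal{J}_R(x)y,w)=R(y,x,x,w)$. For a non-degenerate $k$-dimensional subspace $\sigma\subset V$ with orthonormal basis $\{e_1,\dots,e_k\}$, the higher order Jacobi operator is $\mathcal{J}_R(\sigma)=\sum_{i=1}^k (e_i,e_i)\mathcal{J}_R(e_i)$ (independent of the orthonormal basis). $R$ is called $k$ Osserman if the eigenvalues of $\mathcal{J}_R(\sigma)$ are constant on the Grassmannian of non-degenerate $k$-planes $\sigma\subset V$. The inner product, $R$ and $\mathcal{J}_R$ are extended complex-multilinearly to $V_{\mathbb{C}}=V\otimes\mathbb{C}$; $\mathcal{N}=\{v\in V_{\mathbb{C}}:(v,v)=0\}$ is the set of complex null vectors. A linear map $A$ of $V_{\mathbb{C}}$ is nilpotent if $A^m=0$, equivalently $\operatorname{trace}(A^i)=0$ for $1\le i\le m$. *)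

theory Defs
  imports "HOL-Analysis.Analysis"
begin

text \<open>The model space V is real^'n (dimension CARD('n)); the inner product is
given by a real symmetric Gram matrix G; a 4-tensor R on V is given by its
coefficient array R i j k l with respect to the standard basis.
Everything is extended complex-multilinearly to complex^'n.\<close>

definition rinner :: "real^'n^'n \<Rightarrow> real^'n \<Rightarrow> real^'n \<Rightarrow> real" where
  "rinner G u v = (\<Sum>i\<in>UNIV. \<Sum>j\<in>UNIV. G$i$j * u$i * v$j)"

definition cinner :: "real^'n^'n \<Rightarrow> complex^'n \<Rightarrow> complex^'n \<Rightarrow> complex" where
  "cinner G u v = (\<Sum>i\<in>UNIV. \<Sum>j\<in>UNIV. of_real (G$i$j) * u$i * v$j)"

definition nondeg_sym_inner :: "real^'n^'n \<Rightarrow> bool" where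
  "nondeg_sym_inner G \<longleftrightarrow> transpose G = G \<and>
     (\<forall>u. (\<forall>v. rinner G u v = 0) \<longrightarrow> u = 0)"

definition rtens :: "('n::finite \<Rightarrow> 'n \<Rightarrow> 'n \<Rightarrow> 'n \<Rightarrow> real) \<Rightarrow>
    real^'n \<Rightarrow> real^'n \<Rightarrow> real^'n \<Rightarrow> real^'n \<Rightarrow> real" where
  "rtens R x y z w = (\<Sum>i\<in>UNIV. \<Sum>j\<in>UNIV. \<Sum>k\<in>UNIV. \<Sum>l\<in>UNIV.
      R i j k l * x$i * y$j * z$k * w$l)"

definition ctens :: "('n::finite \<Rightarrow> 'n \<Rightarrow> 'n \<Rightarrow> 'n \<Rightarrow> real) \<Rightarrow>
    complex^'n \<Rightarrow> complex^'n \<Rightarrow> complex^'n \<Rightarrow> complex^'n \<Rightarrow> complex" where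
  "ctens R x y z w = (\<Sum>i\<in>UNIV. \<Sum>j\<in>UNIV. \<Sum>k\<in>UNIV. \<Sum>l\<in>UNIV.
      of_real (R i j k l) * x$i * y$j * z$k * w$l)"

definition algebraic_curvature_tensor :: "('n::finite \<Rightarrow> 'n \<Rightarrow> 'n \<Rightarrow> 'n \<Rightarrow> real) \<Rightarrow> bool" where
  "algebraic_curvature_tensor R \<longleftrightarrow>
     (\<forall>x y z w. rtens R x y z w = rtens R z w x y \<and>
                rtens R x y z w = - rtens R y x z w \<and>
                rtens R x y z w + rtens R y z x w + rtens R z x y w = 0)"

definition jacobi :: "real^'n^'n \<Rightarrow> ('n::finite \<Rightarrow> 'n \<Rightarrow> 'n \<Rightarrow> 'n \<Rightarrow> real) \<Rightarrow> real^'n \<Rightarrow> real^'n^'n" where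
  "jacobi G R x = (THE M. \<forall>y w. rinner G (M *v y) w = rtens R y x x w)"

definition cjacobi :: "real^'n^'n \<Rightarrow> ('n::finite \<Rightarrow> 'n \<Rightarrow> 'n \<Rightarrow> 'n \<Rightarrow> real) \<Rightarrow> complex^'n \<Rightarrow> complex^'n^'n" where
  "cjacobi G R x = (THE M. \<forall>y w. cinner G (M *v y) w = ctens R y x x w)"

definition nondeg_subspace :: "real^'n^'n \<Rightarrow> (real^'n) set \<Rightarrow> bool" where
  "nondeg_subspace G \<sigma> \<longleftrightarrow> subspace \<sigma> \<and>
     (\<forall>u\<in>\<sigma>. (\<forall>v\<in>\<sigma>. rinner G u v = 0) \<longrightarrow> u = 0)"

definition orthonormal_basis :: "real^'n^'n \<Rightarrow> (real^'n) set \<Rightarrow> nat \<Rightarrow> (nat \<Rightarrow> real^'n) \<Rightarrow> bool" where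
  "orthonormal_basis G \<sigma> k e \<longleftrightarrow>
     (\<forall>i<k. e i \<in> \<sigma>) \<and> span (e ` {..<k}) = \<sigma> \<and>
     (\<forall>i<k. \<forall>j<k. i \<noteq> j \<longrightarrow> rinner G (e i) (e j) = 0) \<and>
     (\<forall>i<k. rinner G (e i) (e i) = 1 \<or> rinner G (e i) (e i) = -1)"

definition higher_jacobi :: "real^'n^'n \<Rightarrow> ('n::finite \<Rightarrow> 'n \<Rightarrow> 'n \<Rightarrow> 'n \<Rightarrow> real) \<Rightarrow> nat \<Rightarrow> (nat \<Rightarrow> real^'n) \<Rightarrow> real^'n^'n" where
  "higher_jacobi G R k e = (\<Sum>i<k. rinner G (e i) (e i) *\<^sub>R jacobi G R (e i))"

definition eigenvalues :: "real^'n^'n \<Rightarrow> complex set" where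
  "eigenvalues M = {c. \<exists>v::complex^'n. v \<noteq> 0 \<and>
      (\<chi> i j. complex_of_real (M$i$j)) *v v = c *s v}"

definition k_osserman :: "real^'n^'n \<Rightarrow> ('n::finite \<Rightarrow> 'n \<Rightarrow> 'n \<Rightarrow> 'n \<Rightarrow> real) \<Rightarrow> nat \<Rightarrow> bool" where
  "k_osserman G R k \<longleftrightarrow> (\<exists>S. \<forall>\<sigma> e. nondeg_subspace G \<sigma> \<and> dim \<sigma> = k \<and>
      orthonormal_basis G \<sigma> k e \<longrightarrow> eigenvalues (higher_jacobi G R k e) = S)"

definition nilpotent :: "complex^'n^'n \<Rightarrow> bool" where
  "nilpotent A \<longleftrightarrow> (\<exists>N. ((\<lambda>v. A *v v) ^^ N) = (\<lambda>v. 0))"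

end

theory Submission
  imports Defs "Jordan_Normal_Form.Jordan_Normal_Form_Existence" "HOL-Complex_Analysis.Complex_Analysis"
begin


no_notation Matrix.vec_index (infixl \<open>$\<close> 100)
no_notation fps_nth (infixl \<open>$\<close> 75)

section \<open>Basic bilinear algebra\<close>

definition Cv :: "real^'n \<Rightarrow> complex^'n" where "Cv x = (\<chi> i. complex_of_real (x$i))"
definition CM :: "real^'n^'n \<Rightarrow> complex^'n^'n" where "CM A = (\<chi> i j. complex_of_real (A$i$j))"
definition csm :: "complex \<Rightarrow> complex^'n^'n \<Rightarrow> complex^'n^'n" where "csm c A = (\<chi> i j. c * A$i$j)"

lemma rinner_alt: "rinner G u v = u \<bullet> (G *v v)"
  unfolding rinner_def inner_vec_def matrix_vector_mult_def
  by (simp add: sum_distrib_left mult.assoc mult.left_commute)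

lemma rin_add1: "rinner G (u + v) w = rinner G u w + rinner G v w"
  by (simp add: rinner_alt inner_add_left)
lemma rin_add2: "rinner G w (u + v) = rinner G w u + rinner G w v"
  by (simp add: rinner_alt inner_add_right matrix_vector_right_distrib)
lemma rin_diff1: "rinner G (u - v) w = rinner G u w - rinner G v w"
  by (simp add: rinner_alt inner_diff_left)
lemma rin_diff2: "rinner G w (u - v) = rinner G w u - rinner G w v"
  by (simp add: rinner_alt inner_diff_right matrix_vector_mult_diff_distrib)
lemma rin_scale1: "rinner G (c *\<^sub>R u) w = c * rinner G u w"
  by (simp add: rinner_alt)
lemma rin_scale2: "rinner G w (c *\<^sub>R u) = c * rinner G w u"
  by (simp add: rinner_alt matrix_vector_mult_scaleR)
lemma rin_zero1: "rinner G 0 w = 0" by (simp add: rinner_alt)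
lemma rin_zero2: "rinner G w 0 = 0" by (simp add: rinner_alt)
lemma rin_sum1: "rinner G (\<Sum>i\<in>I. f i) w = (\<Sum>i\<in>I. rinner G (f i) w)"
  by (simp add: rinner_alt inner_sum_left)

lemmas rin_simps = rin_add1 rin_add2 rin_diff1 rin_diff2 rin_scale1 rin_scale2 rin_zero1 rin_zero2

lemma sym_entry: "transpose G = G \<Longrightarrow> G$i$j = G$j$i"
  by (metis transpose_def vec_lambda_beta)

lemma rin_sym: assumes "transpose G = G" shows "rinner G u v = rinner G v u"
proof -
  have "rinner G u v = (\<Sum>i\<in>UNIV. \<Sum>j\<in>UNIV. G$j$i * v$j * u$i)"
    unfolding rinner_def using sym_entry[OF assms] by (simp add: mult_ac)
  also have "\<dots> = rinner G v u" unfolding rinner_def by (rule sum.swap)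
  finally show ?thesis .
qed

lemma cinner_Cv: "cinner G (Cv a) (Cv b) = complex_of_real (rinner G a b)"
  unfolding cinner_def rinner_def Cv_def by simp

lemma cin_decomp:
  assumes "transpose G = G"
  shows "cinner G (Cv a + \<i> *s Cv b) (Cv a + \<i> *s Cv b) =
    complex_of_real (rinner G a a - rinner G b b) + \<i> * complex_of_real (2 * rinner G a b)"
proof -
  have e: "\<And>i j. (G$i$j * a$i * b$j) = G$j$i * b$j * a$i" using sym_entry[OF assms] by (simp add: mult_ac)
  have s: "rinner G b a = rinner G a b" using rin_sym[OF assms] by simp
  have "cinner G (Cv a + \<i> *s Cv b) (Cv a + \<i> *s Cv b) =
     (\<Sum>i\<in>UNIV. \<Sum>j\<in>UNIV. of_real (G$i$j * a$i * a$j) - of_real (G$i$j * b$i * b$j)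
        + \<i> * (of_real (G$i$j * a$i * b$j) + of_real (G$i$j * b$i * a$j)))"
    unfolding cinner_def Cv_def
    by (intro sum.cong refl) (simp add: algebra_simps)
  also have "\<dots> = complex_of_real (rinner G a a) - of_real (rinner G b b) + \<i> * (of_real (rinner G a b) + of_real (rinner G b a))"
    unfolding rinner_def by (simp add: sum.distrib sum_subtractf sum_distrib_left distrib_left)
  finally show ?thesis using s by (simp add: algebra_simps)
qed

lemma vec_decomp: "x = Cv (\<chi> i. Re (x$i)) + \<i> *s Cv (\<chi> i. Im (x$i))"
  unfolding Finite_Cartesian_Product.vec_eq_iff Cv_def by (simp add: complex_eq_iff)


section \<open>Explicit Jacobi operators\<close>

abbreviation "mat1 \<equiv> Finite_Cartesian_Product.mat 1"

definition Ginv :: "real^'n^'n \<Rightarrow> real^'n^'n" where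
  "Ginv G = (SOME B. B ** G = mat1 \<and> G ** B = mat1)"

definition Tr :: "('n::finite \<Rightarrow> 'n \<Rightarrow> 'n \<Rightarrow> 'n \<Rightarrow> real) \<Rightarrow> real^'n \<Rightarrow> real^'n^'n" where
  "Tr R x = (\<chi> j l. \<Sum>a\<in>UNIV. \<Sum>b\<in>UNIV. R l a b j * x$a * x$b)"

definition Tc :: "('n::finite \<Rightarrow> 'n \<Rightarrow> 'n \<Rightarrow> 'n \<Rightarrow> real) \<Rightarrow> complex^'n \<Rightarrow> complex^'n^'n" where
  "Tc R z = (\<chi> j l. \<Sum>a\<in>UNIV. \<Sum>b\<in>UNIV. complex_of_real (R l a b j) * z$a * z$b)"

definition JJ :: "real^'n^'n \<Rightarrow> ('n::finite \<Rightarrow> 'n \<Rightarrow> 'n \<Rightarrow> 'n \<Rightarrow> real) \<Rightarrow> complex^'n \<Rightarrow> complex^'n^'n" where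
  "JJ G R z = CM (Ginv G) ** Tc R z"

lemma swap4: "(\<Sum>j\<in>A. \<Sum>l\<in>B. \<Sum>a\<in>C. \<Sum>b\<in>D. f j l a b) = (\<Sum>l\<in>B. \<Sum>a\<in>C. \<Sum>b\<in>D. \<Sum>j\<in>A. f j l a b)"
  by (simp only: sum.swap[of _ A])

lemma CM_mult: "CM (A ** B) = CM A ** CM B"
  unfolding CM_def Finite_Cartesian_Product.vec_eq_iff matrix_matrix_mult_def by simp

lemma CM_mat1: "CM mat1 = mat1"
  unfolding CM_def Finite_Cartesian_Product.vec_eq_iff Finite_Cartesian_Product.mat_def by simp

lemma CM_Tr: "CM (Tr R x) = Tc R (Cv x)"
  unfolding CM_def Tr_def Tc_def Cv_def Finite_Cartesian_Product.vec_eq_iff by simp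

context
  fixes G :: "real^'n^'n"
  assumes ND: "nondeg_sym_inner G"
begin

lemma symG: "transpose G = G" using ND unfolding nondeg_sym_inner_def by simp
lemma ndG: "(\<And>v. rinner G u v = 0) \<Longrightarrow> u = 0" using ND unfolding nondeg_sym_inner_def by blast

lemma G_inj: assumes "G *v u = 0" shows "u = 0"
proof (rule ndG)
  fix v show "rinner G u v = 0"
    using rin_sym[OF symG, of u v] assms by (simp add: rinner_alt)
qed

lemma Ginv: "Ginv G ** G = mat1" "G ** Ginv G = mat1"
proof -
  obtain B where B: "B ** G = mat1" using matrix_left_invertible_ker[of G] G_inj by blast
  then have "G ** B = mat1" using matrix_left_right_inverse by blast
  with B have "\<exists>B. B ** G = mat1 \<and> G ** B = mat1" by blast
  from someI_ex[OF this] show "Ginv G ** G = mat1" "G ** Ginv G = mat1"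
    unfolding Ginv_def by auto
qed

lemma jac_key: "rinner G ((Ginv G ** Tr R x) *v y) w = rtens R y x x w"
proof -
  have "rinner G ((Ginv G ** Tr R x) *v y) w = w \<bullet> (G *v ((Ginv G ** Tr R x) *v y))"
    by (subst rin_sym[OF symG]) (simp add: rinner_alt)
  also have "G *v ((Ginv G ** Tr R x) *v y) = Tr R x *v y"
    by (simp add: matrix_vector_mul_assoc matrix_mul_assoc Ginv)
  also have "w \<bullet> (Tr R x *v y) = (\<Sum>j\<in>UNIV. \<Sum>l\<in>UNIV. \<Sum>a\<in>UNIV. \<Sum>b\<in>UNIV. R l a b j * y$l * x$a * x$b * w$j)"
    unfolding inner_vec_def matrix_vector_mult_def Tr_def
    by (simp add: sum_distrib_left sum_distrib_right mult_ac)
  also have "\<dots> = rtens R y x x w"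
    unfolding rtens_def by (rule swap4)
  finally show ?thesis .
qed

lemma jac_eq: "jacobi G R x = Ginv G ** Tr R x"
  unfolding jacobi_def
proof (rule the_equality)
  show "\<forall>y w. rinner G ((Ginv G ** Tr R x) *v y) w = rtens R y x x w" using jac_key by blast
next
  fix M assume M: "\<forall>y w. rinner G (M *v y) w = rtens R y x x w"
  show "M = Ginv G ** Tr R x"
    unfolding matrix_eq
  proof
    fix y
    have "M *v y - (Ginv G ** Tr R x) *v y = 0"
      by (rule ndG) (simp add: rin_diff1 M jac_key)
    then show "M *v y = (Ginv G ** Tr R x) *v y" by simp
  qed
qed

lemma cin_alt: "cinner G u w = (\<Sum>j\<in>UNIV. w$j * (CM G *v u)$j)"
proof -
  have "cinner G u w = (\<Sum>i\<in>UNIV. \<Sum>j\<in>UNIV. w$j * (complex_of_real (G$j$i) * u$i))"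
    unfolding cinner_def using sym_entry[OF symG] by (simp add: mult_ac)
  also have "\<dots> = (\<Sum>j\<in>UNIV. \<Sum>i\<in>UNIV. w$j * (complex_of_real (G$j$i) * u$i))"
    by (rule sum.swap)
  finally show ?thesis unfolding matrix_vector_mult_def CM_def by (simp add: sum_distrib_left)
qed

lemma cjac_key: "cinner G ((CM (Ginv G) ** Tc R z) *v y) w = ctens R y z z w"
proof -
  have "CM G *v ((CM (Ginv G) ** Tc R z) *v y) = Tc R z *v y"
    by (simp add: matrix_vector_mul_assoc matrix_mul_assoc CM_mult[symmetric] Ginv CM_mat1)
  then have "cinner G ((CM (Ginv G) ** Tc R z) *v y) w = (\<Sum>j\<in>UNIV. w$j * (Tc R z *v y)$j)"
    by (simp add: cin_alt)
  also have "\<dots> = (\<Sum>j\<in>UNIV. \<Sum>l\<in>UNIV. \<Sum>a\<in>UNIV. \<Sum>b\<in>UNIV. complex_of_real (R l a b j) * y$l * z$a * z$b * w$j)"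
    unfolding matrix_vector_mult_def Tc_def
    by (simp add: sum_distrib_left sum_distrib_right mult_ac)
  also have "\<dots> = ctens R y z z w"
    unfolding ctens_def by (rule swap4)
  finally show ?thesis .
qed

lemma sum_delta_mult: "(\<Sum>ja\<in>UNIV. (if ja = (j::'n::finite) then 1 else 0) * f ja) = (f j :: 'a::comm_ring_1)"
proof -
  have "(\<Sum>ja\<in>UNIV. (if ja = j then 1 else 0) * f ja) = (\<Sum>ja\<in>UNIV. if ja = j then f ja else 0)"
    by (rule sum.cong) auto
  then show ?thesis by simp
qed

lemma cnd: assumes "\<And>w. cinner G u w = 0" shows "u = 0"
proof -
  have "(CM G *v u)$j = 0" for j
    using assms[of "axis j 1"] unfolding cin_alt axis_def
    by (simp add: sum_delta_mult)
  then have "CM G *v u = 0" by (simp add: Finite_Cartesian_Product.vec_eq_iff)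
  then have "CM (Ginv G) *v (CM G *v u) = 0" by simp
  then show ?thesis by (simp add: matrix_vector_mul_assoc CM_mult[symmetric] Ginv CM_mat1)
qed

lemma cin_diff1: "cinner G (u - v) w = cinner G u w - cinner G v w"
  unfolding cinner_def by (simp add: algebra_simps sum_subtractf)

lemma cjac_eq: "cjacobi G R z = JJ G R z"
  unfolding cjacobi_def JJ_def
proof (rule the_equality)
  show "\<forall>y w. cinner G ((CM (Ginv G) ** Tc R z) *v y) w = ctens R y z z w" using cjac_key by blast
next
  fix M assume M: "\<forall>y w. cinner G (M *v y) w = ctens R y z z w"
  show "M = CM (Ginv G) ** Tc R z"
    unfolding matrix_eq
  proof
    fix y
    have "M *v y - (CM (Ginv G) ** Tc R z) *v y = 0"
      by (rule cnd) (simp add: cin_diff1 M cjac_key)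
    then show "M *v y = (CM (Ginv G) ** Tc R z) *v y" by simp
  qed
qed

lemma CM_jac: "CM (jacobi G R x) = JJ G R (Cv x)"
  by (simp add: jac_eq CM_mult CM_Tr JJ_def)

end




definition idx :: "nat \<Rightarrow> 'n::finite" where "idx = (SOME h. bij_betw h {0..<CARD('n)} UNIV)"

lemma idx_bij: "bij_betw (idx :: nat \<Rightarrow> 'n::finite) {0..<CARD('n)} UNIV"
proof -
  have "\<exists>h. bij_betw h {0..<card (UNIV::'n set)} (UNIV::'n set)"
    by (rule ex_bij_betw_nat_finite) simp
  then show ?thesis unfolding idx_def by (rule someI_ex)
qed

lemma idx_surj: "\<exists>i<CARD('n). idx i = (k::'n::finite)"
proof -
  have "k \<in> idx ` {0..<CARD('n)}" using idx_bij[where 'n='n] by (simp add: bij_betw_def)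
  then show ?thesis by auto
qed

lemma idx_inv: "i < CARD('n) \<Longrightarrow> inv_into {0..<CARD('n)} (idx :: nat \<Rightarrow> 'n::finite) (idx i) = i"
  using bij_betw_inv_into_left[OF idx_bij] by simp

definition to_mat :: "'a^'n^'n \<Rightarrow> 'a mat" where
  "to_mat A = Matrix.mat CARD('n) CARD('n) (\<lambda>(i,j). A $ idx i $ idx j)"

definition to_vec :: "'a^'n \<Rightarrow> 'a Matrix.vec" where
  "to_vec v = Matrix.vec CARD('n) (\<lambda>i. v $ idx i)"

lemma to_mat_carrier[simp]: "to_mat (A::'a^'n^'n) \<in> carrier_mat CARD('n) CARD('n)"
  unfolding to_mat_def by simp

lemma to_vec_carrier[simp]: "to_vec (v::'a^'n) \<in> carrier_vec CARD('n)"
  unfolding to_vec_def by simp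

lemma to_vec_inj: assumes "to_vec u = to_vec (v::'a^'n)" shows "u = v"
proof -
  have "u $ k = v $ k" for k
  proof -
    obtain i where i: "i < CARD('n)" "idx i = k" using idx_surj by blast
    have "vec_index (to_vec u) i = vec_index (to_vec v) i" using assms by simp
    then show ?thesis using i unfolding to_vec_def by simp
  qed
  then show ?thesis by (simp add: Finite_Cartesian_Product.vec_eq_iff)
qed

lemma to_vec_zero: "to_vec (0::'a::zero^'n) = 0\<^sub>v CARD('n)"
  unfolding to_vec_def by (rule eq_vecI) auto

lemma to_vec_mult: "to_mat A *\<^sub>v to_vec v = to_vec (A *v (v::'a::comm_semiring_1^'n))"
proof (rule eq_vecI)
  show "dim_vec (to_mat A *\<^sub>v to_vec v) = dim_vec (to_vec (A *v v))"
    by (simp add: to_mat_def to_vec_def)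
next
  fix i assume "i < dim_vec (to_vec (A *v v))"
  then have i: "i < CARD('n)" by (simp add: to_vec_def)
  have "vec_index (to_mat A *\<^sub>v to_vec v) i = (\<Sum>j = 0..<CARD('n). A $ idx i $ idx j * v $ idx j)"
    using i by (simp add: to_mat_def to_vec_def scalar_prod_def)
  also have "\<dots> = (\<Sum>k\<in>UNIV. A $ idx i $ k * v $ k)"
    by (rule sum.reindex_bij_betw[OF idx_bij, where g = "\<lambda>k. A $ idx i $ k * v $ k"])
  also have "\<dots> = vec_index (to_vec (A *v v)) i"
    using i by (simp add: to_vec_def matrix_vector_mult_def)
  finally show "vec_index (to_mat A *\<^sub>v to_vec v) i = vec_index (to_vec (A *v v)) i" .
qed

lemma to_vec_smult: "to_vec (c *s v) = c \<cdot>\<^sub>v to_vec (v::'a::times^'n)"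
  unfolding to_vec_def by (rule eq_vecI) auto

definition cp :: "complex^'n^'n \<Rightarrow> complex \<Rightarrow> complex" where
  "cp A \<mu> = poly (char_poly (to_mat A)) \<mu>"

lemma eig_iff: fixes A :: "complex^'n^'n" shows "(\<exists>v. v \<noteq> 0 \<and> A *v v = c *s v) \<longleftrightarrow> cp A c = 0"
proof
  assume "\<exists>v. v \<noteq> 0 \<and> A *v v = c *s v"
  then obtain v where v: "v \<noteq> 0" "A *v v = c *s v" by blast
  have z: "to_vec (0::complex^'n) = 0\<^sub>v CARD('n)" by (rule to_vec_zero)
  have "to_vec v \<noteq> 0\<^sub>v CARD('n)" using v(1) to_vec_inj[of v "0::complex^'n"] z by metis
  moreover have "to_mat A *\<^sub>v to_vec v = c \<cdot>\<^sub>v to_vec v" using v(2) by (simp add: to_vec_mult to_vec_smult)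
  ultimately have "eigenvalue (to_mat A) c"
    unfolding eigenvalue_def eigenvector_def using to_vec_carrier[of v]
    by (intro exI[of _ "to_vec v"]) (simp add: to_mat_def)
  then show "cp A c = 0" unfolding cp_def using eigenvalue_root_char_poly[OF to_mat_carrier] by blast
next
  assume "cp A c = 0"
  then have "eigenvalue (to_mat A) c" unfolding cp_def using eigenvalue_root_char_poly[OF to_mat_carrier] by blast
  then obtain u where u: "u \<in> carrier_vec CARD('n)" "u \<noteq> 0\<^sub>v CARD('n)" "to_mat A *\<^sub>v u = c \<cdot>\<^sub>v u"
    unfolding eigenvalue_def eigenvector_def by (auto simp: to_mat_def)
  define v :: "complex^'n" where "v = (\<chi> k. vec_index u (inv_into {0..<CARD('n)} idx k))"
  have tv: "to_vec v = u"
    using u(1) unfolding v_def to_vec_def by (intro eq_vecI) (auto simp: idx_inv)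
  have "v \<noteq> 0" using u(2) tv to_vec_zero by metis
  moreover have "to_vec (A *v v) = to_vec (c *s v)"
    using u(3) tv by (simp add: to_vec_mult[symmetric] to_vec_smult)
  ultimately show "\<exists>v. v \<noteq> 0 \<and> A *v v = c *s v" using to_vec_inj by blast
qed

lemma cp_explicit: "cp (A::complex^'n^'n) \<mu> = (\<Sum>p | p permutes {0..<CARD('n)}. of_int (sign p) *
   (\<Prod>i = 0..<CARD('n). (if p i = i then \<mu> else 0) - A $ idx i $ idx (p i)))"
proof -
  have c: "- char_matrix (to_mat A) \<mu> \<in> carrier_mat CARD('n) CARD('n)" by simp
  have "cp A \<mu> = Determinant.det (- char_matrix (to_mat A) \<mu>)"
    unfolding cp_def by (rule char_poly_matrix[OF to_mat_carrier])
  also have "\<dots> = (\<Sum>p | p permutes {0..<CARD('n)}. of_int (sign p) *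
   (\<Prod>i = 0..<CARD('n). (- char_matrix (to_mat A) \<mu>) $$ (i, p i)))"
    by (rule det_def'[OF c])
  also have "\<dots> = (\<Sum>p | p permutes {0..<CARD('n)}. of_int (sign p) *
   (\<Prod>i = 0..<CARD('n). (if p i = i then \<mu> else 0) - A $ idx i $ idx (p i)))"
  proof (rule sum.cong[OF refl], rule arg_cong[where f = "\<lambda>x. _ * x"], rule prod.cong[OF refl])
    fix p i assume p: "p \<in> {p. p permutes {0..<CARD('n)}}" and i: "i \<in> {0..<CARD('n)}"
    have pi: "p i < CARD('n)" using p i by (auto simp: permutes_in_image)
    show "(- char_matrix (to_mat A) \<mu>) $$ (i, p i) = (if p i = i then \<mu> else 0) - A $ idx i $ idx (p i)"
      using i pi by (auto simp: char_matrix_def to_mat_def)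
  qed
  finally show ?thesis .
qed

lemma cp_factor: "\<exists>as. length as = CARD('n) \<and> (\<forall>\<mu>. cp (A::complex^'n^'n) \<mu> = (\<Prod>a\<leftarrow>as. \<mu> - a))"
proof -
  obtain as where as: "char_poly (to_mat A) = (\<Prod>a\<leftarrow>as. [:- a, 1:])" "length as = CARD('n)"
    using char_poly_factorized[OF to_mat_carrier] by blast
  have "cp A \<mu> = (\<Prod>a\<leftarrow>as. \<mu> - a)" for \<mu>
    unfolding cp_def as(1) poly_prod_list by (simp add: o_def)
  with as(2) show ?thesis by blast
qed

lemma roots_factor: assumes "\<forall>\<mu>. cp A \<mu> = (\<Prod>a\<leftarrow>as. \<mu> - a)"
  shows "{c. cp A c = 0} = set as"
  using assms by (auto simp: prod_list_zero_iff)


lemma csm_index[simp]: "csm c A $ i $ j = c * A $ i $ j"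
  unfolding csm_def by simp

lemma cp_scale: assumes c: "c \<noteq> 0"
  shows "cp (csm c (A::complex^'n^'n)) \<mu> = c ^ CARD('n) * cp A (\<mu> / c)"
proof -
  have f: "(if p i = i then \<mu> else 0) - c * A $ idx i $ idx (p i) =
      c * ((if p i = i then \<mu> / c else 0) - A $ idx i $ idx (p i))" for p i
    using c by (auto simp: algebra_simps)
  show ?thesis
    unfolding cp_explicit csm_index f prod.distrib
    by (simp add: sum_distrib_left mult_ac)
qed

lemma cp_holo:
  assumes "\<And>i j. (\<lambda>t. A t $ i $ j) holomorphic_on U"
  shows "(\<lambda>t. cp ((A t)::complex^'n^'n) \<mu>) holomorphic_on U"
  unfolding cp_explicit
  by (intro holomorphic_on_sum holomorphic_on_mult holomorphic_on_const holomorphic_on_prod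
      holomorphic_on_diff assms)

lemma to_vec_funpow:
  "to_vec (((\<lambda>v. A *v v) ^^ N) (v::complex^'n)) = (to_mat A ^\<^sub>m N) *\<^sub>v to_vec v"
proof (induction N arbitrary: v)
  case 0
  then show ?case by (simp add: to_mat_def)
next
  case (Suc N)
  have "to_vec (((\<lambda>v. A *v v) ^^ Suc N) v) = to_vec (((\<lambda>v. A *v v) ^^ N) (A *v v))"
    by (simp only: funpow_Suc_right o_def)
  also have "\<dots> = (to_mat A ^\<^sub>m N) *\<^sub>v (to_mat A *\<^sub>v to_vec v)"
    by (simp add: Suc to_vec_mult)
  also have "\<dots> = (to_mat A ^\<^sub>m N * to_mat A) *\<^sub>v to_vec v"
    by (rule assoc_mult_mat_vec[symmetric, of _ "CARD('n)" "CARD('n)" _ "CARD('n)"]) auto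
  finally show ?case by simp
qed

lemma nilp:
  fixes A :: "complex^'n^'n"
  assumes cpA: "\<And>\<mu>. cp A \<mu> = \<mu> ^ CARD('n)"
  shows "nilpotent A"
proof -
  let ?n = "CARD('n)"
  let ?B = "to_mat A"
  have B: "?B \<in> carrier_mat ?n ?n" by simp
  have "poly (char_poly ?B) = poly ([:0,1:] ^ ?n)"
    using cpA unfolding cp_def by (auto simp: poly_power)
  then have cpB: "char_poly ?B = [:0,1:] ^ ?n" by (simp add: poly_eq_poly_eq_iff)
  have lin: "char_poly ?B = (\<Prod>a\<leftarrow>replicate ?n 0. [:- a, 1:])"
    by (simp add: cpB prod_list_replicate)
  obtain n_as where jnf: "jordan_nf ?B n_as" using jordan_nf_exists[OF B lin] by blast
  obtain P Q where P: "P \<in> carrier_mat ?n ?n" and Q: "Q \<in> carrier_mat ?n ?n"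
    and cpf: "char_poly ?B = (\<Prod>(na, a)\<leftarrow>n_as. [:- a, 1:] ^ na)"
    and pw: "\<And>k. ?B ^\<^sub>m k = P * (jordan_matrix n_as) ^\<^sub>m k * Q"
    using jordan_nf_powE[OF B jnf] by blast
  have a0: "a = 0" if ma: "(m, a) \<in> set n_as" for m a
  proof -
    have m: "m \<noteq> 0" using jnf ma unfolding jordan_nf_def by force
    have "poly (char_poly ?B) a = (\<Prod>x\<leftarrow>n_as. poly ((case x of (na, a) \<Rightarrow> [:- a, 1:] ^ na)) a)"
      unfolding cpf poly_prod_list by (simp add: o_def)
    also have "\<dots> = 0"
    proof -
      have "poly ((case (m, a) of (na, a) \<Rightarrow> [:- a, 1:] ^ na)) a = 0" using m by (simp add: poly_power)
      then have "0 \<in> set (map (\<lambda>x. poly ((case x of (na, a) \<Rightarrow> [:- a, 1:] ^ na)) a) n_as)"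
        using ma by force
      then show ?thesis by (simp add: prod_list_zero_iff)
    qed
    finally have "a ^ ?n = 0" unfolding cpB by (simp add: poly_power)
    then show "a = 0" by simp
  qed
  from jnf have sim: "similar_mat ?B (jordan_matrix n_as)" unfolding jordan_nf_def by simp
  then obtain n' where n': "{?B, jordan_matrix n_as} \<subseteq> carrier_mat n' n'" using similar_matD by blast
  then have B': "?B \<in> carrier_mat n' n'" and J': "jordan_matrix n_as \<in> carrier_mat n' n'" by auto
  have "n' = ?n" using B' B unfolding carrier_mat_def by simp
  with J' have J: "jordan_matrix n_as \<in> carrier_mat ?n ?n" by simp
  then have "dim_row (jordan_matrix n_as) = ?n" unfolding carrier_mat_def by blast
  then have dimJ: "sum_list (map fst n_as) = ?n" by (metis jordan_matrix_dim(1))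
  have blk: "x = 0" if ma: "(m, a) \<in> set n_as" and x: "x \<in> elements_mat (jordan_block m a ^\<^sub>m ?n)" for m a x
  proof -
    obtain i j where ij: "i < m" "j < m" "x = (jordan_block m a ^\<^sub>m ?n) $$ (i, j)"
      using elements_matD[OF x] by auto
    have "m \<in> set (map fst n_as)" using ma by (metis fst_conv image_eqI list.set_map)
    then have "m \<le> ?n" using member_le_sum_list[of m "map fst n_as"] dimJ by simp
    then have "\<not> (i \<le> j \<and> j - i = ?n)" using ij by linarith
    with ij a0[OF ma] show "x = 0" by (simp add: jordan_block_zero_pow)
  qed
  have "elements_mat (jordan_matrix n_as ^\<^sub>m ?n) \<subseteq> {0}"
  proof
    fix x assume "x \<in> elements_mat (jordan_matrix n_as ^\<^sub>m ?n)"
    then have "x \<in> {0} \<union> \<Union> (set (map elements_mat (map (\<lambda>(n, a). jordan_block n a ^\<^sub>m ?n) n_as)))"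
      using elements_diag_block_mat[of "map (\<lambda>(n, a). jordan_block n a ^\<^sub>m ?n) n_as"]
      unfolding jordan_matrix_pow by blast
    then show "x \<in> {0}"
    proof
      assume "x \<in> \<Union> (set (map elements_mat (map (\<lambda>(n, a). jordan_block n a ^\<^sub>m ?n) n_as)))"
      then obtain p where p: "p \<in> set n_as" "x \<in> elements_mat ((\<lambda>(n, a). jordan_block n a ^\<^sub>m ?n) p)" by auto
      obtain m a where "p = (m, a)" by force
      with p blk show ?thesis by auto
    qed
  qed
  note el = this
  have Jp: "jordan_matrix n_as ^\<^sub>m ?n \<in> carrier_mat ?n ?n" using J by simp
  have Jn: "jordan_matrix n_as ^\<^sub>m ?n = 0\<^sub>m ?n ?n"
  proof (rule eq_matI)
    fix i j assume ij: "i < dim_row (0\<^sub>m ?n ?n :: complex mat)" "j < dim_col (0\<^sub>m ?n ?n :: complex mat)"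
    have "(jordan_matrix n_as ^\<^sub>m ?n) $$ (i, j) \<in> elements_mat (jordan_matrix n_as ^\<^sub>m ?n)"
      using ij by (intro elements_matI[OF Jp]) auto
    with el ij show "(jordan_matrix n_as ^\<^sub>m ?n) $$ (i, j) = 0\<^sub>m ?n ?n $$ (i, j)" by auto
  qed (use Jp in auto)
  have Bn: "?B ^\<^sub>m ?n = 0\<^sub>m ?n ?n" using P Q by (simp add: pw Jn)
  show ?thesis
    unfolding nilpotent_def
  proof (intro exI[of _ ?n] ext)
    fix v :: "complex^'n"
    have "to_vec (((\<lambda>v. A *v v) ^^ ?n) v) = to_vec (0::complex^'n)"
    proof -
      have "0\<^sub>m ?n ?n *\<^sub>v to_vec v = 0\<^sub>v ?n"
        by (rule eq_vecI) (auto simp: scalar_prod_def to_vec_def)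
      then show ?thesis by (simp add: to_vec_funpow Bn to_vec_zero)
    qed
    then show "((\<lambda>v. A *v v) ^^ ?n) v = 0" by (rule to_vec_inj)
  qed
qed




section \<open>Orthonormal families\<close>

definition ON :: "real^'n^'n \<Rightarrow> nat \<Rightarrow> (nat \<Rightarrow> real^'n) \<Rightarrow> bool" where
  "ON G j e \<longleftrightarrow> (\<forall>i<j. \<forall>l<j. i \<noteq> l \<longrightarrow> rinner G (e i) (e l) = 0) \<and>
     (\<forall>i<j. rinner G (e i) (e i) = 1 \<or> rinner G (e i) (e i) = -1)"

lemma sum_delta_lt: "(\<Sum>i<(j::nat). c i * (if i = l then x else 0)) = (if l < j then c l * x else (0::real))"
proof -
  have "(\<Sum>i<j. c i * (if i = l then x else 0)) = (\<Sum>i<j. if i = l then c l * x else 0)"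
    by (rule sum.cong) auto
  also have "\<dots> = (if l \<in> {..<j} then c l * x else 0)" by (rule sum.delta) simp
  finally show ?thesis by simp
qed

context
  fixes G :: "real^'n^'n"
  assumes ND: "nondeg_sym_inner G"
begin

lemma ON_sq: "ON G j e \<Longrightarrow> i < j \<Longrightarrow> rinner G (e i) (e i) * rinner G (e i) (e i) = 1"
  unfolding ON_def by auto

lemma ON_pair: "ON G j e \<Longrightarrow> i < j \<Longrightarrow> l < j \<Longrightarrow> i \<noteq> l \<Longrightarrow>
    rinner G (e i) (e l) = 0"
  unfolding ON_def by auto

lemma ON_nz: "ON G j e \<Longrightarrow> i < j \<Longrightarrow> rinner G (e i) (e i) \<noteq> 0"
  unfolding ON_def by fastforce

lemma ON_sum_pair: assumes "ON G j e" "l < j"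
  shows "rinner G (\<Sum>i<j. c i *\<^sub>R e i) (e l) = c l * rinner G (e l) (e l)"
proof -
  have "rinner G (\<Sum>i<j. c i *\<^sub>R e i) (e l) = (\<Sum>i<j. c i * (if i = l then rinner G (e l) (e l) else 0))"
    unfolding rin_sum1 rin_scale1
  proof (rule sum.cong[OF refl])
    fix i assume "i \<in> {..<j}"
    then show "c i * rinner G (e i) (e l) = c i * (if i = l then rinner G (e l) (e l) else 0)"
      using assms ON_pair[of j e i l] by (cases "i = l") auto
  qed
  then show ?thesis using assms(2) by (simp add: sum_delta_lt)
qed

lemma ON_inj: assumes "ON G j e" shows "inj_on e {..<j}"
proof
  fix i l assume il: "i \<in> {..<j}" "l \<in> {..<j}" "e i = e l"
  show "i = l"
  proof (rule ccontr)
    assume "i \<noteq> l"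
    then have "rinner G (e i) (e l) = 0" using assms il unfolding ON_def by auto
    then have "rinner G (e i) (e i) = 0" using il by simp
    then show False using ON_nz[OF assms, of i] il by simp
  qed
qed

lemma ON_span: assumes "ON G j e" "v \<in> span (e ` {..<j})"
  shows "\<exists>c. v = (\<Sum>i<j. c i *\<^sub>R e i)"
proof -
  obtain u where "v = (\<Sum>w\<in>e ` {..<j}. u w *\<^sub>R w)"
    using assms(2) span_finite[of "e ` {..<j}"] by auto
  also have "\<dots> = (\<Sum>i<j. u (e i) *\<^sub>R e i)"
    by (rule sum.reindex[OF ON_inj[OF assms(1)], unfolded o_def])
  finally have "v = (\<Sum>i<j. u (e i) *\<^sub>R e i)" .
  then show ?thesis by (intro exI[of _ "\<lambda>i. u (e i)"]) simp
qed

lemma ON_indep: assumes "ON G j e" shows "independent (e ` {..<j})"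
  unfolding independent_explicit
proof (intro conjI allI impI ballI)
  show "finite (e ` {..<j})" by simp
next
  fix c v assume s: "(\<Sum>v\<in>e ` {..<j}. c v *\<^sub>R v) = 0" and v: "v \<in> e ` {..<j}"
  then obtain l where l: "l < j" "v = e l" by auto
  have "(\<Sum>i<j. c (e i) *\<^sub>R e i) = 0"
    using s sum.reindex[OF ON_inj[OF assms], of "\<lambda>w. c w *\<^sub>R w"] by (simp add: o_def)
  then have "rinner G (\<Sum>i<j. c (e i) *\<^sub>R e i) (e l) = 0" by (simp add: rin_zero1)
  then have "c (e l) * rinner G (e l) (e l) = 0" by (simp add: ON_sum_pair[OF assms l(1)])
  moreover have "rinner G (e l) (e l) \<noteq> 0" using ON_nz[OF assms l(1)] .
  ultimately show "c v = 0" using l by simp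
qed

lemma ON_nondeg: assumes "ON G j e" shows "nondeg_subspace G (span (e ` {..<j}))"
  unfolding nondeg_subspace_def
proof (intro conjI ballI impI, simp)
  fix u assume u: "u \<in> span (e ` {..<j})" and orth: "\<forall>v\<in>span (e ` {..<j}). rinner G u v = 0"
  obtain c where c: "u = (\<Sum>i<j. c i *\<^sub>R e i)" using ON_span[OF assms u] by blast
  have "c l = 0" if l: "l < j" for l
  proof -
    have "rinner G u (e l) = 0" using orth l by (simp add: span_base)
    then have "c l * rinner G (e l) (e l) = 0" using ON_sum_pair[OF assms l] c by simp
    moreover have "rinner G (e l) (e l) \<noteq> 0" using ON_nz[OF assms l] .
    ultimately show ?thesis by simp
  qed
  then show "u = 0" using c by simp
qed

lemma ON_dim: assumes "ON G j e" shows "dim (span (e ` {..<j})) = j"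
  using dim_eq_card_independent[OF ON_indep[OF assms]] card_image[OF ON_inj[OF assms]]
  by (simp add: dim_span)

lemma ON_obasis: assumes "ON G j e" shows "orthonormal_basis G (span (e ` {..<j})) j e"
  using assms unfolding orthonormal_basis_def ON_def by (auto intro: span_base)

lemma EXT: assumes e: "ON G j e" and j: "j < CARD('n)"
  shows "\<exists>v. ON G (Suc j) (e(j := v))"
proof -
  define eps where "eps i = rinner G (e i) (e i)" for i
  define pr where "pr z = z - (\<Sum>i<j. (eps i * rinner G z (e i)) *\<^sub>R e i)" for z
  have prU: "rinner G (pr z) (e l) = 0" if l: "l < j" for z l
  proof -
    have "rinner G (pr z) (e l) = rinner G z (e l) - eps l * rinner G z (e l) * eps l"
      unfolding pr_def rin_diff1 ON_sum_pair[OF e l] eps_def by simp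
    also have "\<dots> = 0" using ON_sq[OF e l] unfolding eps_def by (simp add: algebra_simps)
    finally show ?thesis .
  qed
  have sym: "rinner G a b = rinner G b a" for a b by (rule rin_sym[OF symG[OF ND]])
  have "\<exists>u. (\<forall>l<j. rinner G u (e l) = 0) \<and> rinner G u u \<noteq> 0"
  proof (rule ccontr)
    assume "\<not> ?thesis"
    then have H: "\<And>u. \<forall>l<j. rinner G u (e l) = 0 \<Longrightarrow> rinner G u u = 0" by blast
    have zero: "u = 0" if u: "\<forall>l<j. rinner G u (e l) = 0" for u
    proof (rule ndG[OF ND])
      fix z
      have pU: "\<forall>l<j. rinner G (pr z) (e l) = 0" using prU by blast
      have "\<forall>l<j. rinner G (u + pr z) (e l) = 0" using u pU by (simp add: rin_add1)
      then have "rinner G (u + pr z) (u + pr z) = 0" by (rule H)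
      then have "rinner G u u + rinner G (pr z) (pr z) + 2 * rinner G u (pr z) = 0"
        by (simp add: rin_add1 rin_add2 sym[of "pr z" u] algebra_simps)
      then have up: "rinner G u (pr z) = 0" using H[OF u] H[OF pU] by simp
      have "rinner G u (\<Sum>i<j. (eps i * rinner G z (e i)) *\<^sub>R e i) =
          (\<Sum>i<j. (eps i * rinner G z (e i)) * rinner G (e i) u)"
        by (simp add: sym[of u] rin_sum1 rin_scale1)
      also have "\<dots> = 0" using u by (simp add: sym)
      finally have "rinner G u (\<Sum>i<j. (eps i * rinner G z (e i)) *\<^sub>R e i) = 0" .
      moreover have "z = pr z + (\<Sum>i<j. (eps i * rinner G z (e i)) *\<^sub>R e i)" by (simp add: pr_def)
      ultimately show "rinner G u z = 0" using up by (metis add.right_neutral rin_add2)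
    qed
    have "z \<in> span (e ` {..<j})" for z
    proof -
      have "pr z = 0" using zero prU by blast
      then have "z = (\<Sum>i<j. (eps i * rinner G z (e i)) *\<^sub>R e i)" by (simp add: pr_def)
      also have "\<dots> \<in> span (e ` {..<j})"
        by (intro span_sum span_scale span_base) auto
      finally show ?thesis .
    qed
    then have "UNIV \<subseteq> span (e ` {..<j})" by blast
    then have "dim (UNIV :: (real^'n) set) \<le> card (e ` {..<j})" by (intro dim_le_card) auto
    also have "\<dots> \<le> j" using card_image_le[of "{..<j}" e] by simp
    finally show False using j by (simp add: dim_UNIV)
  qed
  then obtain u where u: "\<forall>l<j. rinner G u (e l) = 0" "rinner G u u \<noteq> 0" by blast
  define v where "v = (1 / sqrt \<bar>rinner G u u\<bar>) *\<^sub>R u"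
  have vv: "rinner G v v = rinner G u u / \<bar>rinner G u u\<bar>"
    unfolding v_def rin_scale1 rin_scale2 using u(2)
    by (simp add: field_simps real_sqrt_mult[symmetric])
  then have vv': "rinner G v v = 1 \<or> rinner G v v = -1" using u(2)
    by (cases "rinner G u u > 0") auto
  have ve: "rinner G v (e l) = 0" "rinner G (e l) v = 0" if "l < j" for l
    using u(1) that by (auto simp: v_def rin_scale1 sym[of "e l"])
  show ?thesis
    unfolding ON_def
  proof (intro exI[of _ v] conjI allI impI)
    fix i l assume "i < Suc j" "l < Suc j" "i \<noteq> l"
    then show "rinner G ((e(j := v)) i) ((e(j := v)) l) = 0"
      using e ve unfolding ON_def by (cases "i = j"; cases "l = j") auto
  next
    fix i assume "i < Suc j"
    then show "rinner G ((e(j := v)) i) ((e(j := v)) i) = 1 \<or> rinner G ((e(j := v)) i) ((e(j := v)) i) = -1"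
      using e vv' unfolding ON_def by (cases "i = j") auto
  qed
qed

lemma EXT_many: assumes "ON G j e" "j \<le> m" "m \<le> CARD('n)"
  shows "\<exists>e'. ON G m e' \<and> (\<forall>i<j. e' i = e i)"
  using assms(2,3)
proof (induction m)
  case 0
  then show ?case using assms(1) by auto
next
  case (Suc m)
  show ?case
  proof (cases "j = Suc m")
    case True
    then show ?thesis using assms(1) by blast
  next
    case False
    then have "j \<le> m" "m \<le> CARD('n)" using Suc.prems by auto
    then obtain e' where e': "ON G m e'" "\<forall>i<j. e' i = e i" using Suc.IH by blast
    obtain v where "ON G (Suc m) (e'(m := v))" using EXT[OF e'(1)] Suc.prems by auto
    moreover have "\<forall>i<j. (e'(m := v)) i = e i" using e'(2) \<open>j \<le> m\<close> by auto
    ultimately show ?thesis by blast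
  qed
qed

end




lemma Cv_add: "Cv (a + b) = Cv a + Cv b"
  unfolding Cv_def by (simp add: Finite_Cartesian_Product.vec_eq_iff)
lemma Cv_scale: "Cv (c *\<^sub>R a) = complex_of_real c *s Cv a"
  unfolding Cv_def by (simp add: Finite_Cartesian_Product.vec_eq_iff)
lemma Cv_index: "Cv a $ i = complex_of_real (a $ i)"
  unfolding Cv_def by simp

lemma csm_add: "csm c (A + B) = csm c A + csm c B"
  unfolding csm_def by (simp add: Finite_Cartesian_Product.vec_eq_iff algebra_simps)
lemma csm_csm: "csm a (csm b A) = csm (a * b) A"
  unfolding csm_def by (simp add: Finite_Cartesian_Product.vec_eq_iff)
lemma csm_one: "csm 1 A = A"
  unfolding csm_def by (simp add: Finite_Cartesian_Product.vec_eq_iff)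
lemma csm_zero: "csm 0 A = 0"
  unfolding csm_def by (simp add: Finite_Cartesian_Product.vec_eq_iff)

lemma CM_add: "CM (A + B) = CM A + CM B"
  unfolding CM_def by (simp add: Finite_Cartesian_Product.vec_eq_iff)
lemma CM_scale: "CM (c *\<^sub>R A) = csm (complex_of_real c) (CM A)"
  unfolding CM_def csm_def by (simp add: Finite_Cartesian_Product.vec_eq_iff)
lemma CM_sum: "CM (\<Sum>i\<in>I. c i *\<^sub>R A i) = (\<Sum>i\<in>I. csm (complex_of_real (c i)) (CM (A i)))"
proof (induction I rule: infinite_finite_induct)
  case (infinite A)
  then show ?case by (simp add: CM_def Finite_Cartesian_Product.vec_eq_iff)
next
  case empty
  then show ?case by (simp add: CM_def Finite_Cartesian_Product.vec_eq_iff)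
next
  case (insert x F)
  then show ?case by (simp add: CM_add CM_scale)
qed

lemma Tc_scale: "Tc R (c *s z) = csm (c^2) (Tc R z)"
  unfolding Tc_def csm_def
  by (simp add: Finite_Cartesian_Product.vec_eq_iff sum_distrib_left power2_eq_square mult_ac)

lemma JJ_scale: "JJ G R (c *s z) = csm (c^2) (JJ G R z)"
  unfolding JJ_def Tc_scale csm_def
  by (simp add: Finite_Cartesian_Product.vec_eq_iff matrix_matrix_mult_def sum_distrib_left mult_ac)

lemma JJ_index: "JJ G R z $ i $ j = (\<Sum>l\<in>UNIV. complex_of_real (Ginv G $ i $ l) *
   (\<Sum>a\<in>UNIV. \<Sum>b\<in>UNIV. complex_of_real (R j a b l) * z$a * z$b))"
  unfolding JJ_def Tc_def CM_def matrix_matrix_mult_def by simp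

lemma JJ_holo:
  assumes "\<And>i. (\<lambda>t. z t $ i) holomorphic_on U"
  shows "(\<lambda>t. JJ G R (z t) $ i $ j) holomorphic_on U"
  unfolding JJ_index
  by (intro holomorphic_on_sum holomorphic_on_mult holomorphic_on_const assms)

lemma prod_list_holo:
  assumes "\<And>a. f a holomorphic_on U"
  shows "(\<lambda>t. prod_list (map (\<lambda>a. f a t) l)) holomorphic_on U"
proof (induction l)
  case Nil
  then show ?case by (simp add: holomorphic_on_const)
next
  case (Cons a l)
  then show ?case by (simp add: holomorphic_on_mult assms)
qed

lemma islimpt0: "0 islimpt (complex_of_real ` {0<..<1})"
  unfolding islimpt_approachable
proof (intro allI impI)
  fix e :: real assume e: "e > 0"
  let ?x = "complex_of_real (min (e/2) (1/2))"
  have "?x \<in> complex_of_real ` {0<..<1}" using e by auto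
  moreover have "?x \<noteq> 0" using e by simp
  moreover have "dist ?x 0 < e" using e by (simp add: dist_norm)
  ultimately show "\<exists>x'\<in>complex_of_real ` {0<..<1}. x' \<noteq> 0 \<and> dist x' 0 < e" by blast
qed

lemma prod_scale: assumes "q \<noteq> 0"
  shows "q ^ length l * (\<Prod>a\<leftarrow>l. \<mu> / q - a) = (\<Prod>a\<leftarrow>l. \<mu> - q * (a::complex))"
proof (induction l)
  case Nil
  then show ?case by simp
next
  case (Cons a l)
  have "q * (\<mu> / q - a) = \<mu> - q * a" using assms by (simp add: field_simps)
  then show ?case using Cons by (simp add: mult_ac)
qed

lemma eigenvalues_cp: "eigenvalues M = {c. cp (CM M) c = 0}"
  unfolding eigenvalues_def CM_def[symmetric] using eig_iff by blast

lemma JJ_add_index: "(A + B) $ i $ j = A $ i $ j + B $ i $ j" for A B :: "complex^'n^'n"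
  by simp


context
  fixes G :: "real^'n^'n" and R :: "'n \<Rightarrow> 'n \<Rightarrow> 'n \<Rightarrow> 'n \<Rightarrow> real" and k :: nat and S :: "complex set"
  assumes ND: "nondeg_sym_inner G"
    and k1: "1 \<le> k" and kn: "Suc k \<le> CARD('n)"
    and PS: "\<And>\<sigma> e. nondeg_subspace G \<sigma> \<Longrightarrow> dim \<sigma> = k \<Longrightarrow> orthonormal_basis G \<sigma> k e \<Longrightarrow>
               eigenvalues (higher_jacobi G R k e) = S"
begin

lemma CORE:
  assumes f: "ON G 2 f"
    and t0: "complex_of_real (rinner G (f 0) (f 0)) + t0^2 * complex_of_real (rinner G (f 1) (f 1)) = 0"
  shows "cp (JJ G R (Cv (f 0) + t0 *s Cv (f 1))) \<mu> = \<mu> ^ CARD('n)"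
proof -
  have sym: "\<And>a b. rinner G a b = rinner G b a" by (rule rin_sym[OF symG[OF ND]])
  obtain F where F: "ON G (Suc k) F" and F01: "\<forall>i<2. F i = f i"
    using EXT_many[OF ND f, of "Suc k"] k1 kn by auto
  have F0: "F 0 = f 0" and F1: "F 1 = f 1" using F01 by auto
  define e1 where "e1 = rinner G (F 0) (F 0)"
  define e2 where "e2 = rinner G (F 1) (F 1)"
  have e1: "e1 = 1 \<or> e1 = -1" and e2: "e2 = 1 \<or> e2 = -1"
    using F k1 unfolding ON_def e1_def e2_def by auto
  have o01: "rinner G (F 0) (F 1) = 0" using F k1 unfolding ON_def by auto
  define w where "w s = F 0 + s *\<^sub>R F 1" for s :: real
  define q where "q s = e1 + s^2 * e2" for s :: real
  define Iv where "Iv = {-1<..<(1::real)}"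
  have o10: "rinner G (F (Suc 0)) (F 0) = 0" "rinner G (F 0) (F (Suc 0)) = 0" using o01 sym[of "F 1" "F 0"] by auto
  have wq: "rinner G (w s) (w s) = q s" for s
    unfolding w_def q_def e1_def e2_def using o10
    by (simp add: rin_add1 rin_add2 rin_scale1 rin_scale2 power2_eq_square)
  have qnz: "q s \<noteq> 0" if "s \<in> Iv" for s
  proof -
    have "(1 - s) * (1 + s) > 0" using that unfolding Iv_def by (intro mult_pos_pos) auto
    then have "s * s < 1" by (simp add: algebra_simps)
    moreover have "0 \<le> s * s" by simp
    ultimately show ?thesis using e1 e2 unfolding q_def power2_eq_square
      by (elim disjE; simp; linarith)
  qed
  define e where "e s i = (if i = 0 then (1 / sqrt \<bar>q s\<bar>) *\<^sub>R w s else F (Suc i))" for s i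
  have e00: "rinner G (e s 0) (e s 0) = q s / \<bar>q s\<bar>" if "s \<in> Iv" for s
    using qnz[OF that] unfolding e_def
    by (simp add: rin_scale1 rin_scale2 wq field_simps real_sqrt_mult[symmetric])
  have ONe: "ON G k (e s)" if s: "s \<in> Iv" for s
  proof -
    have wF: "rinner G (w s) (F l) = 0" if "2 \<le> l" "l < Suc k" for l
    proof -
      have "rinner G (F 0) (F l) = 0" "rinner G (F 1) (F l) = 0"
        using ON_pair[OF ND F, of 0 l] ON_pair[OF ND F, of 1 l] that by auto
      then show ?thesis unfolding w_def by (simp add: rin_add1 rin_scale1)
    qed
    have ee: "rinner G (e s 0) (e s 0) = 1 \<or> rinner G (e s 0) (e s 0) = -1"
      using e00[OF s] qnz[OF s] by (cases "q s > 0") auto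
    have pair: "rinner G (e s i) (e s l) = 0" if "i < k" "l < k" "i \<noteq> l" for i l
    proof (cases "i = 0")
      case True
      then have "l \<noteq> 0" using that by auto
      then show ?thesis using True that wF[of "Suc l"] unfolding e_def by (simp add: rin_scale1)
    next
      case False
      show ?thesis
      proof (cases "l = 0")
        case True
        then show ?thesis using False that wF[of "Suc i"] unfolding e_def by (simp add: rin_scale2 sym[of "F (Suc i)"])
      next
        case False
        then show ?thesis using \<open>i \<noteq> 0\<close> that ON_pair[OF ND F, of "Suc i" "Suc l"] unfolding e_def by simp
      qed
    qed
    have nrm: "rinner G (e s i) (e s i) = 1 \<or> rinner G (e s i) (e s i) = -1" if "i < k" for i
    proof (cases "i = 0")
      case True
      then show ?thesis using ee by simp
    next
      case False
      then show ?thesis using F that unfolding ON_def e_def by auto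
    qed
    show ?thesis unfolding ON_def using pair nrm by blast
  qed
  have HJ: "eigenvalues (higher_jacobi G R k (e s)) = S" if "s \<in> Iv" for s
    using PS[OF ON_nondeg[OF ND ONe[OF that]] ON_dim[OF ND ONe[OF that]] ON_obasis[OF ND ONe[OF that]]] .
  define Bc where "Bc = (\<Sum>i\<in>{1..<k}. csm (complex_of_real (rinner G (F (Suc i)) (F (Suc i)))) (JJ G R (Cv (F (Suc i)))))"
  define qc where "qc t = complex_of_real e1 + t^2 * complex_of_real e2" for t
  define Mc where "Mc t = csm (1 / qc t) (JJ G R (Cv (F 0) + t *s Cv (F 1))) + Bc" for t
  have qcs: "qc (complex_of_real s) = complex_of_real (q s)" for s unfolding qc_def q_def by simp
  have HM: "CM (higher_jacobi G R k (e s)) = Mc (complex_of_real s)" if s: "s \<in> Iv" for s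
  proof -
    have "CM (higher_jacobi G R k (e s)) = (\<Sum>i<k. csm (complex_of_real (rinner G (e s i) (e s i))) (JJ G R (Cv (e s i))))"
      unfolding higher_jacobi_def CM_sum CM_jac[OF ND] ..
    also have "{..<k} = insert 0 {1..<k}" using k1 by auto
    also have "(\<Sum>i\<in>insert 0 {1..<k}. csm (complex_of_real (rinner G (e s i) (e s i))) (JJ G R (Cv (e s i))))
       = csm (complex_of_real (rinner G (e s 0) (e s 0))) (JJ G R (Cv (e s 0))) + Bc"
      unfolding Bc_def by (subst sum.insert) (auto simp: e_def)
    also have "csm (complex_of_real (rinner G (e s 0) (e s 0))) (JJ G R (Cv (e s 0))) =
        csm (1 / qc (complex_of_real s)) (JJ G R (Cv (F 0) + complex_of_real s *s Cv (F 1)))"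
    proof -
      define c where "c = 1 / sqrt \<bar>q s\<bar>"
      have cc: "c * c = 1 / \<bar>q s\<bar>" unfolding c_def using qnz[OF s]
        by (simp add: real_sqrt_mult[symmetric])
      have "q s / \<bar>q s\<bar> * (c * c) = 1 / q s" unfolding cc using qnz[OF s]
        by (cases "q s > 0") (auto simp: field_simps)
      then have sc: "complex_of_real (q s / \<bar>q s\<bar>) * (complex_of_real c)^2 = 1 / qc (complex_of_real s)"
        unfolding qcs power2_eq_square by (metis of_real_mult of_real_divide of_real_1)
      have "e s 0 = c *\<^sub>R w s" unfolding e_def c_def by simp
      then have "JJ G R (Cv (e s 0)) = csm ((complex_of_real c)^2) (JJ G R (Cv (F 0) + complex_of_real s *s Cv (F 1)))"
        by (simp only: w_def Cv_scale Cv_add JJ_scale)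
      then show ?thesis using e00[OF s] sc by (simp add: csm_csm)
    qed
    finally show ?thesis unfolding Mc_def by simp
  qed
  have Sroots: "S = {c. cp (Mc (complex_of_real s)) c = 0}" if "s \<in> Iv" for s
  proof -
    have "S = eigenvalues (higher_jacobi G R k (e s))" using HJ[OF that] by simp
    also have "\<dots> = {c. cp (CM (higher_jacobi G R k (e s))) c = 0}" by (rule eigenvalues_cp)
    finally show ?thesis unfolding HM[OF that] .
  qed
  have I0: "0 \<in> Iv" unfolding Iv_def by simp
  obtain as0 where as0: "length as0 = CARD('n)" "\<forall>\<mu>. cp (Mc 0) \<mu> = (\<Prod>a\<leftarrow>as0. \<mu> - a)"
    using cp_factor by blast
  have S0: "S = set as0" using Sroots[OF I0] roots_factor[OF as0(2)] by simp
  have finS: "finite S" using S0 by simp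
  define Om where "Om = {t. qc t \<noteq> 0}"
  have openOm: "open Om" unfolding Om_def qc_def by (intro open_Collect_neq continuous_intros)
  have lin_holo: "(\<lambda>t. (u + t *s v) $ i) holomorphic_on U" for u v :: "complex^'n" and i U
    by (simp add: holomorphic_on_add holomorphic_on_mult holomorphic_on_const holomorphic_on_id)
  have qc_holo: "qc holomorphic_on U" for U
    unfolding qc_def by (intro holomorphic_intros)
  have Mc_idx: "Mc t $ i $ j = (1 / qc t) * JJ G R (Cv (F 0) + t *s Cv (F 1)) $ i $ j + Bc $ i $ j" for t i j
    unfolding Mc_def by simp
  have Mc_holo: "(\<lambda>t. Mc t $ i $ j) holomorphic_on Om" for i j
    unfolding Mc_idx
    by (intro holomorphic_on_add holomorphic_on_mult holomorphic_on_divide holomorphic_on_const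
        qc_holo JJ_holo lin_holo) (auto simp: Om_def)
  have g_cont: "continuous_on Iv (\<lambda>s. cp (Mc (complex_of_real s)) \<mu>')" for \<mu>'
  proof -
    have "(\<lambda>t. cp (Mc t) \<mu>') holomorphic_on Om" by (rule cp_holo) (rule Mc_holo)
    then have c: "continuous_on Om (\<lambda>t. cp (Mc t) \<mu>')" by (rule holomorphic_on_imp_continuous_on)
    have "complex_of_real ` Iv \<subseteq> Om" using qnz qcs by (auto simp: Om_def)
    moreover have "continuous_on Iv complex_of_real" by (intro continuous_intros)
    ultimately show ?thesis using continuous_on_compose2[OF c] by blast
  qed
  have const: "cp (Mc (complex_of_real s)) \<mu>' = (\<Prod>a\<leftarrow>as0. \<mu>' - a)" if s: "s \<in> Iv" for s \<mu>'
  proof -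
    let ?g = "\<lambda>s. cp (Mc (complex_of_real s)) \<mu>'"
    have sub: "?g ` Iv \<subseteq> (\<lambda>l. \<Prod>a\<leftarrow>l. \<mu>' - a) ` {l. set l \<subseteq> S \<and> length l = CARD('n)}"
    proof
      fix y assume "y \<in> ?g ` Iv"
      then obtain s where s: "s \<in> Iv" "y = ?g s" by auto
      obtain as where as: "length as = CARD('n)" "\<forall>\<mu>. cp (Mc (complex_of_real s)) \<mu> = (\<Prod>a\<leftarrow>as. \<mu> - a)"
        using cp_factor by blast
      have "set as = S" using roots_factor[OF as(2)] Sroots[OF s(1)] by simp
      then show "y \<in> (\<lambda>l. \<Prod>a\<leftarrow>l. \<mu>' - a) ` {l. set l \<subseteq> S \<and> length l = CARD('n)}"
        using as s by auto
    qed
    have fin: "finite (?g ` Iv)"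
      by (rule finite_subset[OF sub]) (intro finite_imageI finite_lists_length_eq finS)
    have "?g constant_on Iv"
      by (rule continuous_finite_range_constant[OF _ g_cont fin]) (simp add: Iv_def)
    then have "?g s = ?g 0" using s I0 unfolding constant_on_def by metis
    then show ?thesis using as0(2) by simp
  qed
  define Phi where "Phi t = cp (JJ G R (Cv (F 0) + t *s Cv (F 1)) + csm (qc t) Bc) \<mu>" for t
  define Om2 where "Om2 t = (\<Prod>a\<leftarrow>as0. \<mu> - qc t * a)" for t
  have PhiOm: "Phi (complex_of_real s) = Om2 (complex_of_real s)" if s: "s \<in> Iv" for s
  proof -
    let ?q = "qc (complex_of_real s)"
    have qn: "?q \<noteq> 0" using qnz[OF s] qcs by simp
    have "JJ G R (Cv (F 0) + complex_of_real s *s Cv (F 1)) + csm ?q Bc = csm ?q (Mc (complex_of_real s))"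
      unfolding Mc_def csm_add csm_csm using qn by (simp add: csm_one)
    then have "Phi (complex_of_real s) = ?q ^ CARD('n) * cp (Mc (complex_of_real s)) (\<mu> / ?q)"
      unfolding Phi_def using cp_scale[OF qn] by simp
    also have "\<dots> = ?q ^ length as0 * (\<Prod>a\<leftarrow>as0. \<mu> / ?q - a)" using const[OF s] as0(1) by simp
    also have "\<dots> = Om2 (complex_of_real s)" unfolding Om2_def by (rule prod_scale[OF qn])
    finally show ?thesis .
  qed
  have Phi_holo: "Phi holomorphic_on UNIV"
    unfolding Phi_def
  proof (rule cp_holo)
    fix i j
    have "(\<lambda>t. JJ G R (Cv (F 0) + t *s Cv (F 1)) $ i $ j + qc t * Bc $ i $ j) holomorphic_on UNIV"
      by (intro holomorphic_on_add holomorphic_on_mult holomorphic_on_const qc_holo JJ_holo lin_holo)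
    then show "(\<lambda>t. (JJ G R (Cv (F 0) + t *s Cv (F 1)) + csm (qc t) Bc) $ i $ j) holomorphic_on UNIV"
      by simp
  qed
  have Om2_holo: "Om2 holomorphic_on UNIV"
    unfolding Om2_def
    by (rule prod_list_holo[of "\<lambda>a t. \<mu> - qc t * a"])
       (intro holomorphic_on_diff holomorphic_on_mult holomorphic_on_const qc_holo)
  have "Phi t0 - Om2 t0 = 0"
  proof (rule analytic_continuation[of "\<lambda>t. Phi t - Om2 t" UNIV "complex_of_real ` {0<..<1}" 0])
    show "(\<lambda>t. Phi t - Om2 t) holomorphic_on UNIV" by (intro holomorphic_on_diff Phi_holo Om2_holo)
  next
    fix z assume "z \<in> complex_of_real ` {0<..<1}"
    then obtain s where s: "s \<in> {0<..<1}" "z = complex_of_real s" by auto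
    then have "s \<in> Iv" unfolding Iv_def by auto
    then show "Phi z - Om2 z = 0" using PhiOm s by simp
  qed (auto simp: islimpt0)
  moreover have "qc t0 = 0" using t0 F0 F1 unfolding qc_def e1_def e2_def by simp
  moreover have "(\<Prod>a\<leftarrow>as0. \<mu> - 0 * a) = \<mu> ^ length as0" by (induction as0) auto
  ultimately show ?thesis unfolding Phi_def Om2_def using as0(1) F0 F1 by (simp add: csm_zero)
qed

lemma scale_ok:
  assumes "\<And>\<mu>. cp (JJ G R z) \<mu> = \<mu> ^ CARD('n)" and d: "d \<noteq> 0"
  shows "cp (JJ G R (d *s z)) \<mu> = \<mu> ^ CARD('n)"
proof -
  have d2: "d^2 \<noteq> 0" using d by simp
  have "cp (JJ G R (d *s z)) \<mu> = (d^2) ^ CARD('n) * (\<mu> / d^2) ^ CARD('n)"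
    unfolding JJ_scale cp_scale[OF d2] assms ..
  also have "\<dots> = \<mu> ^ CARD('n)" using d2 by (simp add: power_divide)
  finally show ?thesis .
qed

lemma GOOD:
  assumes ab: "rinner G a a = rinner G b b" "rinner G a b = 0" and r: "rinner G a a \<noteq> 0"
  shows "cp (JJ G R (Cv a + \<i> *s Cv b)) \<mu> = \<mu> ^ CARD('n)"
proof -
  have sym: "\<And>a b. rinner G a b = rinner G b a" by (rule rin_sym[OF symG[OF ND]])
  define r where "r = rinner G a a"
  define c where "c = 1 / sqrt \<bar>r\<bar>"
  have cc: "c * c = 1 / \<bar>r\<bar>" unfolding c_def using r by (simp add: r_def real_sqrt_mult[symmetric])
  have pm: "c * c * r = 1 \<or> c * c * r = -1" unfolding cc using r by (cases "r > 0") (auto simp: r_def)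
  define f where "f i = (if i = 0 then c *\<^sub>R a else c *\<^sub>R b)" for i :: nat
  have ff: "rinner G (f 0) (f 0) = c * c * r" "rinner G (f 1) (f 1) = c * c * r"
    "rinner G (f 0) (f 1) = 0" "rinner G (f 1) (f 0) = 0"
    unfolding f_def r_def using ab sym[of b a] by (auto simp: rin_scale1 rin_scale2)
  have ON2: "ON G 2 f"
    unfolding ON_def
  proof (intro conjI allI impI)
    fix i l :: nat assume "i < 2" "l < 2" "i \<noteq> l"
    then have "(i = 0 \<and> l = 1) \<or> (i = 1 \<and> l = 0)" by auto
    then show "rinner G (f i) (f l) = 0" using ff by auto
  next
    fix i :: nat assume "i < 2"
    then have "i = 0 \<or> i = 1" by auto
    then show "rinner G (f i) (f i) = 1 \<or> rinner G (f i) (f i) = -1" using ff pm by auto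
  qed
  have t0: "complex_of_real (rinner G (f 0) (f 0)) + \<i>^2 * complex_of_real (rinner G (f 1) (f 1)) = 0"
    using ff by simp
  have core: "cp (JJ G R (Cv (f 0) + \<i> *s Cv (f 1))) \<mu>' = \<mu>' ^ CARD('n)" for \<mu>'
    by (rule CORE[OF ON2 t0])
  have sc: "sqrt \<bar>r\<bar> * c = 1" unfolding c_def using r by (simp add: r_def)
  have "Cv a + \<i> *s Cv b = complex_of_real (sqrt \<bar>r\<bar>) *s (Cv (f 0) + \<i> *s Cv (f 1))"
    unfolding f_def using sc
    by (simp add: Cv_scale Finite_Cartesian_Product.vec_eq_iff algebra_simps flip: of_real_mult)
  moreover have "complex_of_real (sqrt \<bar>r\<bar>) \<noteq> 0" using r by (simp add: r_def)
  ultimately show ?thesis using scale_ok[OF core] by simp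
qed

lemma HYP:
  assumes vv: "rinner G v v = 0" and v0: "v \<noteq> 0"
  shows "cp (JJ G R (Cv v)) \<mu> = \<mu> ^ CARD('n)"
proof -
  have sym: "\<And>a b. rinner G a b = rinner G b a" by (rule rin_sym[OF symG[OF ND]])
  obtain u where u: "rinner G v u \<noteq> 0" using ndG[OF ND, of v] v0 by blast
  define c where "c = (1 / rinner G v u) *\<^sub>R u"
  have vc: "rinner G v c = 1" "rinner G c v = 1" unfolding c_def using u sym[of u v] by (auto simp: rin_scale1 rin_scale2)
  define v' where "v' = c - (rinner G c c / 2) *\<^sub>R v"
  have vv': "rinner G v v' = 1" "rinner G v' v = 1" unfolding v'_def using vv vc by (auto simp: rin_simps)
  have v'v': "rinner G v' v' = 0" unfolding v'_def using vv vc by (simp add: rin_simps algebra_simps)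
  define f where "f i = (if i = 0 then (1 / sqrt 2) *\<^sub>R (v + v') else (1 / sqrt 2) *\<^sub>R (v - v'))" for i :: nat
  have ff: "rinner G (f 0) (f 0) = 1" "rinner G (f 1) (f 1) = -1"
    "rinner G (f 0) (f 1) = 0" "rinner G (f 1) (f 0) = 0"
    unfolding f_def using vv vv' v'v' by (auto simp: rin_simps)
  have ON2: "ON G 2 f"
    unfolding ON_def
  proof (intro conjI allI impI)
    fix i l :: nat assume "i < 2" "l < 2" "i \<noteq> l"
    then have "(i = 0 \<and> l = 1) \<or> (i = 1 \<and> l = 0)" by auto
    then show "rinner G (f i) (f l) = 0" using ff by auto
  next
    fix i :: nat assume "i < 2"
    then have "i = 0 \<or> i = 1" by auto
    then show "rinner G (f i) (f i) = 1 \<or> rinner G (f i) (f i) = -1" using ff by auto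
  qed
  have t0: "complex_of_real (rinner G (f 0) (f 0)) + 1^2 * complex_of_real (rinner G (f 1) (f 1)) = 0"
    using ff by simp
  have core: "cp (JJ G R (Cv (f 0) + 1 *s Cv (f 1))) \<mu>' = \<mu>' ^ CARD('n)" for \<mu>'
    by (rule CORE[OF ON2 t0])
  have s2: "(1 / sqrt 2) * 2 = sqrt (2::real)"
  proof -
    have "sqrt 2 * sqrt 2 = (2::real)" by simp
    then show ?thesis by (simp add: field_simps)
  qed
  have "f 0 + f 1 = (1 / sqrt 2) *\<^sub>R ((v + v') + (v - v'))"
    unfolding f_def by (simp only: scaleR_right_distrib) simp
  also have "(v + v') + (v - v') = 2 *\<^sub>R v" by (simp add: scaleR_2)
  also have "(1 / sqrt 2) *\<^sub>R (2 *\<^sub>R v) = sqrt 2 *\<^sub>R v" using s2 by simp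
  finally have "f 0 + f 1 = sqrt 2 *\<^sub>R v" .
  then have "Cv v = complex_of_real (1 / sqrt 2) *s (Cv (f 0) + 1 *s Cv (f 1))"
    by (simp add: Cv_add[symmetric] Cv_scale)
  moreover have "complex_of_real (1 / sqrt 2) \<noteq> 0" by simp
  ultimately show ?thesis using scale_ok[OF core] by simp
qed

end




lemma lin_holo2: "(\<lambda>t. (u + t *s v) $ i) holomorphic_on U" for u v :: "complex^'n"
  by (simp add: holomorphic_on_add holomorphic_on_mult holomorphic_on_const holomorphic_on_id)

context
  fixes G :: "real^'n^'n" and R :: "'n \<Rightarrow> 'n \<Rightarrow> 'n \<Rightarrow> 'n \<Rightarrow> real" and k :: nat and S :: "complex set"
  assumes ND: "nondeg_sym_inner G"
    and k1: "1 \<le> k" and kn: "Suc k \<le> CARD('n)"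
    and PS: "\<And>\<sigma> e. nondeg_subspace G \<sigma> \<Longrightarrow> dim \<sigma> = k \<Longrightarrow> orthonormal_basis G \<sigma> k e \<Longrightarrow>
               eigenvalues (higher_jacobi G R k e) = S"
begin

lemma DENS:
  assumes aa: "rinner G a a = 0" and bb: "rinner G b b = 0" and ab: "rinner G a b = 0"
    and ind: "\<And>\<alpha> \<beta>. \<alpha> *\<^sub>R a + \<beta> *\<^sub>R b = 0 \<Longrightarrow> \<alpha> = 0 \<and> \<beta> = 0"
  shows "cp (JJ G R (Cv a + \<i> *s Cv b)) \<mu> = \<mu> ^ CARD('n)"
proof -
  have sym: "\<And>a b. rinner G a b = rinner G b a" by (rule rin_sym[OF symG[OF ND]])
  define al where "al = G *v a"
  define be where "be = G *v b"
  have rin_al: "rinner G x a = x \<bullet> al" "rinner G x b = x \<bullet> be" for x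
    by (simp_all add: rinner_alt al_def be_def)
  have indab: "l = 0 \<and> m = 0" if "l *\<^sub>R al + m *\<^sub>R be = 0" for l m
  proof -
    have "G *v (l *\<^sub>R a + m *\<^sub>R b) = 0"
      using that by (simp add: al_def be_def matrix_vector_right_distrib matrix_vector_mult_scaleR)
    then have "l *\<^sub>R a + m *\<^sub>R b = 0" by (rule G_inj[OF ND])
    then show ?thesis by (rule ind)
  qed
  have bne: "be \<noteq> 0" using indab[of 0 1] by auto
  have ane: "al \<noteq> 0" using indab[of 1 0] by auto
  define c0 where "c0 = (be \<bullet> be) *\<^sub>R al - (al \<bullet> be) *\<^sub>R be"
  have c0b: "c0 \<bullet> be = 0" unfolding c0_def inner_diff_left inner_scaleR_left by (simp add: mult.commute)
  have c0ne: "c0 \<noteq> 0"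
  proof
    assume "c0 = 0"
    then have "(be \<bullet> be) *\<^sub>R al + (- (al \<bullet> be)) *\<^sub>R be = 0" unfolding c0_def by simp
    then have "be \<bullet> be = 0" using indab by blast
    then show False using bne by simp
  qed
  have "c0 \<bullet> c0 = (be \<bullet> be) * (c0 \<bullet> al) - (al \<bullet> be) * (c0 \<bullet> be)"
    by (subst (2) c0_def) (simp only: inner_diff_right inner_scaleR_right)
  then have "c0 \<bullet> c0 = (be \<bullet> be) * (c0 \<bullet> al)" using c0b by simp
  moreover have "c0 \<bullet> c0 > 0" using c0ne by simp
  moreover have "be \<bullet> be > 0" using bne by simp
  ultimately have c0a: "c0 \<bullet> al > 0" by (metis zero_less_mult_pos)
  define c where "c = (1 / (c0 \<bullet> al)) *\<^sub>R c0"
  have ca: "c \<bullet> al = 1" "c \<bullet> be = 0" unfolding c_def using c0a c0b by auto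
  define d0 where "d0 = (al \<bullet> al) *\<^sub>R be - (al \<bullet> be) *\<^sub>R al"
  have bal: "be \<bullet> al = al \<bullet> be" by (rule inner_commute)
  have d0a: "d0 \<bullet> al = 0" unfolding d0_def inner_diff_left inner_scaleR_left bal by (simp add: mult.commute)
  have d0ne: "d0 \<noteq> 0"
  proof
    assume "d0 = 0"
    then have "(- (al \<bullet> be)) *\<^sub>R al + (al \<bullet> al) *\<^sub>R be = 0" unfolding d0_def by (simp add: algebra_simps)
    then have "al \<bullet> al = 0" using indab by blast
    then show False using ane by simp
  qed
  have "d0 \<bullet> d0 = (al \<bullet> al) * (d0 \<bullet> be) - (al \<bullet> be) * (d0 \<bullet> al)"
    by (subst (2) d0_def) (simp only: inner_diff_right inner_scaleR_right)
  then have "d0 \<bullet> d0 = (al \<bullet> al) * (d0 \<bullet> be)" using d0a by simp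
  moreover have "d0 \<bullet> d0 > 0" using d0ne by simp
  moreover have "al \<bullet> al > 0" using ane by simp
  ultimately have d0b: "d0 \<bullet> be > 0" by (metis zero_less_mult_pos)
  define d where "d = (1 / (d0 \<bullet> be)) *\<^sub>R d0"
  have db: "d \<bullet> be = 1" "d \<bullet> al = 0" unfolding d_def using d0b d0a by auto
  have P: "rinner G c a = 1" "rinner G c b = 0" "rinner G d a = 0" "rinner G d b = 1"
    using ca db by (simp_all add: rin_al)
  have P': "rinner G a c = 1" "rinner G b c = 0" "rinner G a d = 0" "rinner G b d = 1"
    using P sym by metis+
  have ab': "rinner G b a = 0" using ab sym by metis
  have cd': "rinner G d c = rinner G c d" using sym by metis
  define c' where "c' = c - (rinner G c c / 2) *\<^sub>R a - rinner G c d *\<^sub>R b"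
  define d' where "d' = d - (rinner G d d / 2) *\<^sub>R b"
  have Q: "rinner G a c' = 1" "rinner G c' a = 1" "rinner G b c' = 0" "rinner G c' b = 0"
    "rinner G a d' = 0" "rinner G d' a = 0" "rinner G b d' = 1" "rinner G d' b = 1"
    unfolding c'_def d'_def using P P' aa bb ab ab' by (simp_all add: rin_simps)
  have Q2: "rinner G c' c' = 0" "rinner G d' d' = 0" "rinner G c' d' = 0" "rinner G d' c' = 0"
    unfolding c'_def d'_def using P P' aa bb ab ab' cd' by (simp_all add: rin_simps algebra_simps)
  have good: "cp (JJ G R (Cv (a + s *\<^sub>R c') + \<i> *s Cv (b + s *\<^sub>R d'))) \<mu> = \<mu> ^ CARD('n)"
    if s: "s \<in> {0<..<1}" for s
  proof (rule GOOD[OF ND k1 kn PS])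
    have A: "rinner G (a + s *\<^sub>R c') (a + s *\<^sub>R c') = 2 * s"
      using Q Q2 aa by (simp add: rin_simps)
    have B: "rinner G (b + s *\<^sub>R d') (b + s *\<^sub>R d') = 2 * s"
      using Q Q2 bb by (simp add: rin_simps)
    have C: "rinner G (a + s *\<^sub>R c') (b + s *\<^sub>R d') = 0"
      using Q Q2 ab by (simp add: rin_simps)
    show "rinner G (a + s *\<^sub>R c') (a + s *\<^sub>R c') = rinner G (b + s *\<^sub>R d') (b + s *\<^sub>R d')" using A B by simp
    show "rinner G (a + s *\<^sub>R c') (b + s *\<^sub>R d') = 0" by (rule C)
    show "rinner G (a + s *\<^sub>R c') (a + s *\<^sub>R c') \<noteq> 0" using A s by simp
  qed (use PS in auto)
  define x where "x = Cv a + \<i> *s Cv b"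
  define y where "y = Cv c' + \<i> *s Cv d'"
  have eqv: "Cv (a + s *\<^sub>R c') + \<i> *s Cv (b + s *\<^sub>R d') = x + complex_of_real s *s y" for s
    unfolding x_def y_def by (simp add: Cv_add Cv_scale Finite_Cartesian_Product.vec_eq_iff algebra_simps)
  define Psi where "Psi t = cp (JJ G R (x + t *s y)) \<mu>" for t
  have Psi_holo: "Psi holomorphic_on UNIV"
    unfolding Psi_def by (intro cp_holo JJ_holo lin_holo2)
  have "Psi 0 - \<mu> ^ CARD('n) = 0"
  proof (rule analytic_continuation[of "\<lambda>t. Psi t - \<mu> ^ CARD('n)" UNIV "complex_of_real ` {0<..<1}" 0])
    show "(\<lambda>t. Psi t - \<mu> ^ CARD('n)) holomorphic_on UNIV" by (intro holomorphic_on_diff Psi_holo holomorphic_on_const)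
  next
    fix z assume "z \<in> complex_of_real ` {0<..<1}"
    then obtain s where s: "s \<in> {0<..<1}" "z = complex_of_real s" by auto
    show "Psi z - \<mu> ^ CARD('n) = 0" unfolding Psi_def s(2) eqv[symmetric] using good[OF s(1)] by simp
  qed (auto simp: islimpt0)
  then show ?thesis unfolding Psi_def x_def by simp
qed

end

lemma Cv_zero: "Cv 0 = 0"
  unfolding Cv_def by (simp add: Finite_Cartesian_Product.vec_eq_iff)

theorem theorem1p1:
  fixes G :: "real^'n^'n" and R :: "'n \<Rightarrow> 'n \<Rightarrow> 'n \<Rightarrow> 'n \<Rightarrow> real" and k :: nat
  assumes "CARD('n) \<ge> 3"
    and "nondeg_sym_inner G"
    and "algebraic_curvature_tensor R"
    and "1 \<le> k" and "k \<le> CARD('n) - 1"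
    and "k_osserman G R k"
  shows "\<forall>x::complex^'n. cinner G x x = 0 \<longrightarrow> nilpotent (cjacobi G R x)"
proof (intro allI impI)
  fix x :: "complex^'n" assume null: "cinner G x x = 0"
  note ND = assms(2) and k1 = assms(4)
  obtain S where S: "\<forall>\<sigma> e. nondeg_subspace G \<sigma> \<and> dim \<sigma> = k \<and> orthonormal_basis G \<sigma> k e \<longrightarrow>
      eigenvalues (higher_jacobi G R k e) = S"
    using assms(6) unfolding k_osserman_def by blast
  have PS: "\<And>\<sigma> e. nondeg_subspace G \<sigma> \<Longrightarrow> dim \<sigma> = k \<Longrightarrow> orthonormal_basis G \<sigma> k e \<Longrightarrow>
      eigenvalues (higher_jacobi G R k e) = S" using S by blast
  have kn: "Suc k \<le> CARD('n)" using assms(1,5) by linarith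
  have cj: "cjacobi G R x = JJ G R x" by (rule cjac_eq[OF ND])
  show "nilpotent (cjacobi G R x)"
  proof (cases "x = 0")
    case True
    have "JJ G R ((0::complex) *s (0::complex^'n)) = csm (0^2) (JJ G R 0)" by (rule JJ_scale)
    then have "JJ G R 0 = 0" by (simp add: csm_zero)
    then have "cjacobi G R x = 0" using cj True by simp
    then show ?thesis unfolding nilpotent_def
      by (intro exI[of _ 1] ext) (simp add: matrix_vector_mult_def Finite_Cartesian_Product.vec_eq_iff)
  next
    case x0: False
    define a where "a = (\<chi> i. Re (x$i))"
    define b where "b = (\<chi> i. Im (x$i))"
    have xd: "x = Cv a + \<i> *s Cv b" unfolding a_def b_def by (rule vec_decomp)
    have "cinner G x x = complex_of_real (rinner G a a - rinner G b b) + \<i> * complex_of_real (2 * rinner G a b)"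
      unfolding xd by (rule cin_decomp[OF symG[OF ND]])
    then have abe: "rinner G a a = rinner G b b" "rinner G a b = 0"
      using null by (simp_all add: complex_eq_iff)
    have "cp (JJ G R x) \<mu> = \<mu> ^ CARD('n)" for \<mu>
    proof (cases "rinner G a a = 0")
      case False
      have gd: "cp (JJ G R (Cv a + \<i> *s Cv b)) \<mu> = \<mu> ^ CARD('n)"
        by (rule GOOD[OF ND k1 kn PS abe False])
      then show ?thesis using xd by simp
    next
      case aa: True
      then have bb: "rinner G b b = 0" using abe by simp
      show ?thesis
      proof (cases "\<forall>\<alpha> \<beta>. \<alpha> *\<^sub>R a + \<beta> *\<^sub>R b = 0 \<longrightarrow> \<alpha> = 0 \<and> \<beta> = 0")
        case True
        then have ind: "\<And>\<alpha> \<beta>. \<alpha> *\<^sub>R a + \<beta> *\<^sub>R b = 0 \<Longrightarrow> \<alpha> = 0 \<and> \<beta> = 0" by blast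
        have gd: "cp (JJ G R (Cv a + \<i> *s Cv b)) \<mu> = \<mu> ^ CARD('n)"
          by (rule DENS[OF ND k1 kn PS aa bb abe(2) ind])
        then show ?thesis using xd by simp
      next
        case False
        then obtain al be where dep: "al *\<^sub>R a + be *\<^sub>R b = 0" "al \<noteq> 0 \<or> be \<noteq> 0" by blast
        show ?thesis
        proof (cases "be = 0")
          case True
          then have a0: "a = 0" using dep by simp
          then have x': "x = \<i> *s Cv b" using xd by (simp add: Cv_zero)
          have "b \<noteq> 0" using x' x0 by (auto simp: Cv_zero)
          have h: "cp (JJ G R (Cv b)) \<mu>' = \<mu>' ^ CARD('n)" for \<mu>'
            by (rule HYP[OF ND k1 kn PS bb \<open>b \<noteq> 0\<close>])
          have "cp (JJ G R (\<i> *s Cv b)) \<mu> = \<mu> ^ CARD('n)"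
            using scale_ok[OF ND k1 kn PS h, where d = \<i>] by simp
          then show ?thesis using x' by simp
        next
          case False
          have "be *\<^sub>R b = - (al *\<^sub>R a)" using dep(1) by (simp add: eq_neg_iff_add_eq_0 add.commute)
          then have bdef: "b = (- al / be) *\<^sub>R a" using False
            by (metis (no_types, lifting) divide_inverse_commute minus_mult_left real_vector.scale_minus_left
                scaleR_scaleR right_inverse scaleR_one mult.commute)
          define dd where "dd = 1 + \<i> * complex_of_real (- al / be)"
          have x': "x = dd *s Cv a" unfolding xd bdef dd_def
            by (simp add: Cv_index Finite_Cartesian_Product.vec_eq_iff algebra_simps)
          have ddn: "dd \<noteq> 0" unfolding dd_def by (simp add: complex_eq_iff)
          have "a \<noteq> 0" using x' x0 by (auto simp: Cv_zero)
          have h: "cp (JJ G R (Cv a)) \<mu>' = \<mu>' ^ CARD('n)" for \<mu>'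
            by (rule HYP[OF ND k1 kn PS aa \<open>a \<noteq> 0\<close>])
          have "cp (JJ G R (dd *s Cv a)) \<mu> = \<mu> ^ CARD('n)"
            using scale_ok[OF ND k1 kn PS h ddn] by simp
          then show ?thesis using x' by simp
        qed
      qed
    qed
    then show ?thesis unfolding cj by (rule nilp)
  qed
qed


end
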